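(* Let $\mathfrak{A} = (A; \mathcal{I})$ be a countable structure and $T$ a first-order theory consisting of $\Pi_2$ sentences, both over the same signature $\sigma$. Then either $|\mathrm{Sub}(\mathfrak{A}, T)| \leq \aleph_0$ or $|\mathrm{Sub}(\mathfrak{A}, T)| = 2^{\aleph_0}$.
   Context: $\mathrm{Sub}(\mathfrak A,T)$ is the set of all substructures $\mathfrak B$ of $\mathfrak A$ with $\mathfrak B\models T$. A structure $(A;\mathcal I)$, where $\mathcal I$ interprets the signature $\mathrm{dom}(\mathcal I)$, is countable iff $\max\{|A|,|\mathcal I|\}$ is countable. *)

theory Defs
  imports Main "HOL-Library.Countable_Set" "HOL-Library.Equipollence" Complex_Main
begin

text \<open>Constants are 0-ary function symbols.\<close>

datatype 'f trm = Var nat | Fun 'f "'f trm list"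

datatype ('f, 'r) fm =
    Eq "'f trm" "'f trm"
  | Rel 'r "'f trm list"
  | Neg "('f, 'r) fm"
  | Conj "('f, 'r) fm" "('f, 'r) fm"
  | Disj "('f, 'r) fm" "('f, 'r) fm"
  | Ex nat "('f, 'r) fm"
  | All nat "('f, 'r) fm"

fun wf_trm :: "('f \<Rightarrow> nat) \<Rightarrow> 'f trm \<Rightarrow> bool" where
  "wf_trm arF (Var x) = True"
| "wf_trm arF (Fun f ts) = (length ts = arF f \<and> (\<forall>t\<in>set ts. wf_trm arF t))"

fun wf_fm :: "('f \<Rightarrow> nat) \<Rightarrow> ('r \<Rightarrow> nat) \<Rightarrow> ('f, 'r) fm \<Rightarrow> bool" where
  "wf_fm arF arR (Eq s t) = (wf_trm arF s \<and> wf_trm arF t)"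
| "wf_fm arF arR (Rel r ts) = (length ts = arR r \<and> (\<forall>t\<in>set ts. wf_trm arF t))"
| "wf_fm arF arR (Neg p) = wf_fm arF arR p"
| "wf_fm arF arR (Conj p q) = (wf_fm arF arR p \<and> wf_fm arF arR q)"
| "wf_fm arF arR (Disj p q) = (wf_fm arF arR p \<and> wf_fm arF arR q)"
| "wf_fm arF arR (Ex x p) = wf_fm arF arR p"
| "wf_fm arF arR (All x p) = wf_fm arF arR p"

fun fv_trm :: "'f trm \<Rightarrow> nat set" where
  "fv_trm (Var x) = {x}"
| "fv_trm (Fun f ts) = (\<Union>t\<in>set ts. fv_trm t)"

fun fv :: "('f, 'r) fm \<Rightarrow> nat set" where
  "fv (Eq s t) = fv_trm s \<union> fv_trm t"
| "fv (Rel r ts) = (\<Union>t\<in>set ts. fv_trm t)"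
| "fv (Neg p) = fv p"
| "fv (Conj p q) = fv p \<union> fv q"
| "fv (Disj p q) = fv p \<union> fv q"
| "fv (Ex x p) = fv p - {x}"
| "fv (All x p) = fv p - {x}"

definition sentence :: "('f, 'r) fm \<Rightarrow> bool" where
  "sentence p \<longleftrightarrow> fv p = {}"

fun qfree :: "('f, 'r) fm \<Rightarrow> bool" where
  "qfree (Eq s t) = True"
| "qfree (Rel r ts) = True"
| "qfree (Neg p) = qfree p"
| "qfree (Conj p q) = (qfree p \<and> qfree q)"
| "qfree (Disj p q) = (qfree p \<and> qfree q)"
| "qfree (Ex x p) = False"
| "qfree (All x p) = False"

inductive is_Sigma1 :: "('f, 'r) fm \<Rightarrow> bool" where
  "qfree p \<Longrightarrow> is_Sigma1 p"
| "is_Sigma1 p \<Longrightarrow> is_Sigma1 (Ex x p)"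

inductive is_Pi2 :: "('f, 'r) fm \<Rightarrow> bool" where
  "is_Sigma1 p \<Longrightarrow> is_Pi2 p"
| "is_Pi2 p \<Longrightarrow> is_Pi2 (All x p)"

fun eval :: "('f \<Rightarrow> 'u list \<Rightarrow> 'u) \<Rightarrow> (nat \<Rightarrow> 'u) \<Rightarrow> 'f trm \<Rightarrow> 'u" where
  "eval Fi e (Var x) = e x"
| "eval Fi e (Fun f ts) = Fi f (map (eval Fi e) ts)"

fun sat :: "'u set \<Rightarrow> ('f \<Rightarrow> 'u list \<Rightarrow> 'u) \<Rightarrow> ('r \<Rightarrow> 'u list \<Rightarrow> bool)
             \<Rightarrow> (nat \<Rightarrow> 'u) \<Rightarrow> ('f, 'r) fm \<Rightarrow> bool" where
  "sat D Fi Ri e (Eq s t) = (eval Fi e s = eval Fi e t)"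
| "sat D Fi Ri e (Rel r ts) = Ri r (map (eval Fi e) ts)"
| "sat D Fi Ri e (Neg p) = (\<not> sat D Fi Ri e p)"
| "sat D Fi Ri e (Conj p q) = (sat D Fi Ri e p \<and> sat D Fi Ri e q)"
| "sat D Fi Ri e (Disj p q) = (sat D Fi Ri e p \<or> sat D Fi Ri e q)"
| "sat D Fi Ri e (Ex x p) = (\<exists>a\<in>D. sat D Fi Ri (e(x := a)) p)"
| "sat D Fi Ri e (All x p) = (\<forall>a\<in>D. sat D Fi Ri (e(x := a)) p)"

definition closed_dom :: "('f \<Rightarrow> nat) \<Rightarrow> 'u set \<Rightarrow> ('f \<Rightarrow> 'u list \<Rightarrow> 'u) \<Rightarrow> bool" where
  "closed_dom arF D Fi \<longleftrightarrow>
     D \<noteq> {} \<and> (\<forall>f xs. set xs \<subseteq> D \<and> length xs = arF f \<longrightarrow> Fi f xs \<in> D)"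

definition is_structure :: "('f \<Rightarrow> nat) \<Rightarrow> 'u set \<Rightarrow> ('f \<Rightarrow> 'u list \<Rightarrow> 'u) \<Rightarrow> bool" where
  "is_structure arF A Fi \<longleftrightarrow> closed_dom arF A Fi"

definition models :: "'u set \<Rightarrow> ('f \<Rightarrow> 'u list \<Rightarrow> 'u) \<Rightarrow> ('r \<Rightarrow> 'u list \<Rightarrow> bool)
                       \<Rightarrow> ('f, 'r) fm set \<Rightarrow> bool" where
  "models D Fi Ri T \<longleftrightarrow> (\<forall>p\<in>T. \<forall>e. range e \<subseteq> D \<longrightarrow> sat D Fi Ri e p)"

text \<open>A substructure is
  determined by its (nonempty, closed) domain B; its interpretations are the
  restrictions of Fi, Ri to B, which is what sat over B with Fi, Ri computes.\<close>
definition Sub :: "('f \<Rightarrow> nat) \<Rightarrow> 'u set \<Rightarrow> ('f \<Rightarrow> 'u list \<Rightarrow> 'u) \<Rightarrow> ('r \<Rightarrow> 'u list \<Rightarrow> bool)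
                   \<Rightarrow> ('f, 'r) fm set \<Rightarrow> 'u set set" where
  "Sub arF A Fi Ri T = {B. B \<subseteq> A \<and> closed_dom arF B Fi \<and> models B Fi Ri T}"

end

theory Submission
  imports Defs "HOL-Analysis.Analysis"
begin
definition cyl :: "'a set \<Rightarrow> 'a set \<Rightarrow> 'a set \<Rightarrow> 'a set set" where
  "cyl A P N = {B. B \<subseteq> A \<and> P \<subseteq> B \<and> N \<inter> B = {}}"

definition opn :: "'a set \<Rightarrow> 'a set set \<Rightarrow> bool" where
  "opn A U \<longleftrightarrow> (\<forall>B\<in>U. B \<subseteq> A \<longrightarrow> (\<exists>P N. finite P \<and> finite N \<and> B \<in> cyl A P N \<and> cyl A P N \<subseteq> U))"

lemma opnD:
  assumes "opn A U" "B \<in> U" "B \<subseteq> A"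
  obtains P N where "finite P" "finite N" "B \<in> cyl A P N" "cyl A P N \<subseteq> U"
  using assms unfolding opn_def by meson

primrec node :: "(nat \<Rightarrow> 'c \<Rightarrow> 'c \<times> 'c) \<Rightarrow> 'c \<Rightarrow> (nat \<Rightarrow> bool) \<Rightarrow> nat \<Rightarrow> 'c" where
  "node sp c0 \<alpha> 0 = c0"
| "node sp c0 \<alpha> (Suc k) = (if \<alpha> k then fst (sp k (node sp c0 \<alpha> k)) else snd (sp k (node sp c0 \<alpha> k)))"

lemma infinite_two: "infinite S \<Longrightarrow> \<exists>x y. x \<in> S \<and> y \<in> S \<and> x \<noteq> y"
  by (metis finite.emptyI finite_insert insertI1 subsetI subset_singletonD finite_subset ex_in_conv)

lemma perfect_seq:
  fixes A :: "'a set" and u :: "nat \<Rightarrow> 'a set set"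
  assumes cA: "countable A" and op: "\<And>n. opn A (u n)"
    and unc: "uncountable F" and F: "F = {B. B \<subseteq> A \<and> (\<forall>n. B \<in> u n)}"
  shows "\<exists>g :: (nat \<Rightarrow> bool) \<Rightarrow> 'a set. inj g \<and> range g \<subseteq> F"
proof -
  define K where "K = {(P,N). finite P \<and> finite N \<and> P \<subseteq> A \<and> N \<subseteq> A}"
  have cK: "countable K"
  proof -
    have "K = {P. finite P \<and> P \<subseteq> A} \<times> {N. finite N \<and> N \<subseteq> A}" by (auto simp: K_def)
    thus ?thesis using countable_Collect_finite_subset[OF cA] by simp
  qed
  define big where "big = (\<lambda>c :: 'a set \<times> 'a set. uncountable (cyl A (fst c) (snd c) \<inter> F))"
  define C where "C = {B\<in>F. \<forall>c\<in>K. B \<in> cyl A (fst c) (snd c) \<longrightarrow> big c}"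
  have cFC: "countable (F - C)"
  proof -
    have "F - C \<subseteq> (\<Union>c\<in>{c\<in>K. \<not> big c}. cyl A (fst c) (snd c) \<inter> F)"
      by (auto simp: C_def)
    moreover have "countable (\<Union>c\<in>{c\<in>K. \<not> big c}. cyl A (fst c) (snd c) \<inter> F)"
      using cK by (intro countable_UN) (auto simp: big_def)
    ultimately show ?thesis by (rule countable_subset)
  qed
  define ext where "ext = (\<lambda>c c1 :: 'a set \<times> 'a set. fst c \<subseteq> fst c1 \<and> snd c \<subseteq> snd c1)"
  define Q where "Q = (\<lambda>n (c::'a set \<times> 'a set) c1 c2. c1 \<in> K \<and> c2 \<in> K \<and> big c1 \<and> big c2 \<and> ext c c1 \<and> ext c c2
      \<and> cyl A (fst c1) (snd c1) \<subseteq> u n \<and> cyl A (fst c2) (snd c2) \<subseteq> u n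
      \<and> (fst c1 \<inter> snd c2 \<noteq> {} \<or> fst c2 \<inter> snd c1 \<noteq> {}))"
  have extend: "\<exists>c1. c1 \<in> K \<and> big c1 \<and> P \<union> P0 \<subseteq> fst c1 \<and> N \<union> N0 \<subseteq> snd c1 \<and> cyl A (fst c1) (snd c1) \<subseteq> u n"
    if "(P,N) \<in> K" "X \<in> cyl A P N" "X \<in> C" "finite P0" "P0 \<subseteq> X" "finite N0" "N0 \<subseteq> A" "N0 \<inter> X = {}"
    for P N X P0 N0 n
  proof -
    have XF: "X \<in> F" "X \<subseteq> A" using that(3) by (auto simp: C_def F)
    hence "X \<in> u n" using F by auto
    then obtain P' N' where PN': "finite P'" "finite N'" "X \<in> cyl A P' N'" "cyl A P' N' \<subseteq> u n"
      using opnD[OF op[of n] _ XF(2)] by metis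
    define c1 where "c1 = (P \<union> P0 \<union> P', N \<union> N0 \<union> (N' \<inter> A))"
    have "c1 \<in> K" using that PN' XF(2) by (auto simp: c1_def K_def cyl_def)
    moreover have "X \<in> cyl A (fst c1) (snd c1)" using that PN' by (auto simp: c1_def cyl_def)
    hence "big c1" using `c1 \<in> K` that(3) by (auto simp: C_def)
    moreover have "cyl A (fst c1) (snd c1) \<subseteq> cyl A P' N'" unfolding c1_def cyl_def by auto
    hence "cyl A (fst c1) (snd c1) \<subseteq> u n" using PN'(4) by blast
    ultimately show ?thesis by (auto simp: c1_def)
  qed
  have split: "\<exists>c1 c2. Q n c c1 c2" if "c \<in> K" "big c" for c n
  proof -
    obtain P N where c: "c = (P,N)" by force
    have "uncountable (cyl A P N \<inter> F)" using that c big_def by simp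
    moreover have "cyl A P N \<inter> F \<subseteq> (cyl A P N \<inter> C) \<union> (F - C)" by (auto simp: C_def)
    ultimately have "uncountable (cyl A P N \<inter> C)" using cFC
      by (metis countable_Un countable_subset)
    hence "infinite (cyl A P N \<inter> C)" using countable_finite by blast
    then obtain X Y where XY: "X \<in> cyl A P N \<inter> C" "Y \<in> cyl A P N \<inter> C" "X \<noteq> Y"
      using infinite_two by blast
    have gen: "\<exists>c1 c2. Q n c c1 c2" if "X \<in> cyl A P N \<inter> C" "Y \<in> cyl A P N \<inter> C" "a \<in> X" "a \<notin> Y" for X Y a
    proof -
      have "X \<subseteq> A" using that by (auto simp: cyl_def)
      have "\<exists>c1. c1 \<in> K \<and> big c1 \<and> P \<union> {a} \<subseteq> fst c1 \<and> N \<union> {} \<subseteq> snd c1 \<and> cyl A (fst c1) (snd c1) \<subseteq> u n"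
        by (rule extend) (use that `c \<in> K` c in auto)
      then obtain c1 where c1: "c1 \<in> K" "big c1" "P \<union> {a} \<subseteq> fst c1" "N \<union> {} \<subseteq> snd c1" "cyl A (fst c1) (snd c1) \<subseteq> u n"
        by blast
      have "\<exists>c2. c2 \<in> K \<and> big c2 \<and> P \<union> {} \<subseteq> fst c2 \<and> N \<union> {a} \<subseteq> snd c2 \<and> cyl A (fst c2) (snd c2) \<subseteq> u n"
        by (rule extend) (use that `c \<in> K` c `X \<subseteq> A` in auto)
      then obtain c2 where c2: "c2 \<in> K" "big c2" "P \<union> {} \<subseteq> fst c2" "N \<union> {a} \<subseteq> snd c2" "cyl A (fst c2) (snd c2) \<subseteq> u n"
        by blast
      have "Q n c c1 c2" unfolding Q_def ext_def using c1 c2 c by auto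
      thus ?thesis by blast
    qed
    show ?thesis
    proof (cases "\<exists>a. a \<in> X \<and> a \<notin> Y")
      case True thus ?thesis using gen XY by blast
    next
      case False
      then obtain a where "a \<in> Y" "a \<notin> X" using XY(3) by blast
      then obtain c1 c2 where "Q n c c1 c2" using gen XY by blast
      hence "Q n c c2 c1" unfolding Q_def by blast
      thus ?thesis by blast
    qed
  qed
  have "\<forall>n c. \<exists>p. c \<in> K \<and> big c \<longrightarrow> Q n c (fst p) (snd p)" using split by fastforce
  then obtain sp where sp: "\<And>n c. c \<in> K \<Longrightarrow> big c \<Longrightarrow> Q n c (fst (sp n c)) (snd (sp n c))" by metis
  define c0 where "c0 = ({}::'a set, {}::'a set)"
  have c0: "c0 \<in> K" "big c0"
  proof -
    show "c0 \<in> K" by (simp add: c0_def K_def)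
    have "cyl A {} {} \<inter> F = F" by (auto simp: cyl_def F)
    thus "big c0" using unc by (simp add: big_def c0_def)
  qed
  let ?nd = "node sp c0"
  have inv: "?nd \<alpha> k \<in> K \<and> big (?nd \<alpha> k)" for \<alpha> k
  proof (induction k)
    case 0 thus ?case using c0 by simp
  next
    case (Suc k) thus ?case using sp[of "?nd \<alpha> k" k] unfolding Q_def by auto
  qed
  have step: "ext (?nd \<alpha> k) (?nd \<alpha> (Suc k)) \<and> cyl A (fst (?nd \<alpha> (Suc k))) (snd (?nd \<alpha> (Suc k))) \<subseteq> u k" for \<alpha> k
    using sp[of "?nd \<alpha> k" k] inv[of \<alpha> k] unfolding Q_def by auto
  have mono1: "fst (?nd \<alpha> m) \<subseteq> fst (?nd \<alpha> n)" if "m \<le> n" for \<alpha> m n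
    using lift_Suc_mono_le[of "\<lambda>k. fst (?nd \<alpha> k)", OF _ that] step unfolding ext_def by blast
  have mono2: "snd (?nd \<alpha> m) \<subseteq> snd (?nd \<alpha> n)" if "m \<le> n" for \<alpha> m n
    using lift_Suc_mono_le[of "\<lambda>k. snd (?nd \<alpha> k)", OF _ that] step unfolding ext_def by blast
  have disj: "fst c \<inter> snd c = {}" if "big c" for c
  proof -
    from that have "cyl A (fst c) (snd c) \<noteq> {}" unfolding big_def by auto
    thus ?thesis by (auto simp: cyl_def)
  qed
  define g where "g = (\<lambda>\<alpha>. \<Union>k. fst (?nd \<alpha> k))"
  have gcyl: "g \<alpha> \<in> cyl A (fst (?nd \<alpha> n)) (snd (?nd \<alpha> n))" for \<alpha> n
  proof -
    have "fst (?nd \<alpha> k) \<subseteq> A" for k using inv[of \<alpha> k] by (cases "?nd \<alpha> k") (auto simp: K_def)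
    hence "g \<alpha> \<subseteq> A" unfolding g_def by blast
    moreover have "fst (?nd \<alpha> n) \<subseteq> g \<alpha>" unfolding g_def by blast
    moreover have "snd (?nd \<alpha> n) \<inter> g \<alpha> = {}"
    proof (rule ccontr)
      assume "snd (?nd \<alpha> n) \<inter> g \<alpha> \<noteq> {}"
      then obtain x m where x: "x \<in> snd (?nd \<alpha> n)" "x \<in> fst (?nd \<alpha> m)" unfolding g_def by blast
      have "x \<in> snd (?nd \<alpha> (max m n))" using mono2[of n "max m n" \<alpha>] x by auto
      moreover have "x \<in> fst (?nd \<alpha> (max m n))" using mono1[of m "max m n" \<alpha>] x by auto
      ultimately show False using disj[of "?nd \<alpha> (max m n)"] inv by blast
    qed
    ultimately show ?thesis by (simp add: cyl_def)
  qed
  have gF: "g \<alpha> \<in> F" for \<alpha>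
  proof -
    have "g \<alpha> \<in> u n" for n using gcyl[of \<alpha> "Suc n"] step[of \<alpha> n] by blast
    moreover have "g \<alpha> \<subseteq> A" using gcyl[of \<alpha> 0] by (simp add: cyl_def)
    ultimately show ?thesis using F by auto
  qed
  have "inj g"
  proof (rule injI, rule ccontr)
    fix \<alpha> \<beta> assume eq: "g \<alpha> = g \<beta>" and ne: "\<alpha> \<noteq> \<beta>"
    then obtain n0 where "\<alpha> n0 \<noteq> \<beta> n0" by blast
    define n where "n = (LEAST n. \<alpha> n \<noteq> \<beta> n)"
    have n: "\<alpha> n \<noteq> \<beta> n" unfolding n_def by (rule LeastI) fact
    have below: "\<alpha> i = \<beta> i" if "i < n" for i using not_less_Least[of i "\<lambda>n. \<alpha> n \<noteq> \<beta> n"] that n_def by blast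
    have same: "k \<le> n \<Longrightarrow> ?nd \<alpha> k = ?nd \<beta> k" for k
      by (induction k) (auto simp: below Suc_le_eq)
    define c where "c = ?nd \<alpha> n"
    have Qc: "Q n c (fst (sp n c)) (snd (sp n c))" using sp inv c_def by blast
    have s: "{?nd \<alpha> (Suc n), ?nd \<beta> (Suc n)} = {fst (sp n c), snd (sp n c)}"
      using n same[of n] c_def by auto
    have memb: "x \<in> fst (?nd \<gamma> k) \<Longrightarrow> x \<in> g \<gamma>" "x \<in> snd (?nd \<gamma> k) \<Longrightarrow> x \<notin> g \<gamma>" for x \<gamma> k
      using gcyl[of \<gamma> k] by (auto simp: cyl_def)
    from Qc obtain x where "(x \<in> fst (fst (sp n c)) \<and> x \<in> snd (snd (sp n c))) \<or> (x \<in> fst (snd (sp n c)) \<and> x \<in> snd (fst (sp n c)))"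
      unfolding Q_def by blast
    then show False using s eq n memb[of x _ "Suc n"]
      by (smt (verit) doubleton_eq_iff)
  qed
  thus ?thesis using gF by blast
qed


instance trm :: (countable) countable by countable_datatype
instance fm :: (countable, countable) countable by countable_datatype

lemma countable_fm:
  assumes "countable (UNIV :: 'f set)" "countable (UNIV :: 'r set)"
  shows "countable (UNIV :: ('f,'r) fm set)"
proof -
  have "inj (map_fm (to_nat_on (UNIV::'f set)) (to_nat_on (UNIV::'r set)))"
    by (intro fm.inj_map inj_on_to_nat_on assms)
  moreover have "countable (range (map_fm (to_nat_on (UNIV::'f set)) (to_nat_on (UNIV::'r set))))"
    by simp
  ultimately show ?thesis using countable_image_inj_on by blast
qed

lemma eval_cong: "(\<forall>x\<in>fv_trm t. e x = e' x) \<Longrightarrow> eval Fi e t = eval Fi e' t"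
proof (induction t)
  case (Var x) thus ?case by simp
next
  case (Fun f ts)
  hence "map (eval Fi e) ts = map (eval Fi e') ts" by (auto intro!: map_cong)
  thus ?case by (metis eval.simps(2))
qed

lemma sat_cong: "(\<forall>x\<in>fv p. e x = e' x) \<Longrightarrow> sat D Fi Ri e p = sat D Fi Ri e' p"
proof (induction p arbitrary: e e')
  case (Eq s t) thus ?case using eval_cong[of s e e' Fi] eval_cong[of t e e' Fi] by simp
next
  case (Rel r ts)
  have "eval Fi e t = eval Fi e' t" if "t \<in> set ts" for t
    using Rel that by (intro eval_cong) auto
  hence "map (eval Fi e) ts = map (eval Fi e') ts" by (intro map_cong) auto
  thus ?case by (metis sat.simps(2))
next
  case (Ex x p)
  have "sat D Fi Ri (e(x := a)) p = sat D Fi Ri (e'(x := a)) p" for a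
    using Ex.prems by (intro Ex.IH) auto
  thus ?case by simp
next
  case (All x p)
  have "sat D Fi Ri (e(x := a)) p = sat D Fi Ri (e'(x := a)) p" for a
    using All.prems by (intro All.IH) auto
  thus ?case by simp
next
  case (Neg p) thus ?case using Neg.IH[of e e'] Neg.prems by simp
next
  case (Conj p q)
  have "sat D Fi Ri e p = sat D Fi Ri e' p" "sat D Fi Ri e q = sat D Fi Ri e' q"
    using Conj.IH(1)[of e e'] Conj.IH(2)[of e e'] Conj.prems by auto
  thus ?case by simp
next
  case (Disj p q)
  have "sat D Fi Ri e p = sat D Fi Ri e' p" "sat D Fi Ri e q = sat D Fi Ri e' q"
    using Disj.IH(1)[of e e'] Disj.IH(2)[of e e'] Disj.prems by auto
  thus ?case by simp
qed

lemma qfree_indep: "qfree p \<Longrightarrow> sat D Fi Ri e p = sat D' Fi Ri e p"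
  by (induction p) auto

lemma sigma1_wit:
  "is_Sigma1 p \<Longrightarrow> sat B Fi Ri e p \<Longrightarrow> \<exists>P. finite P \<and> P \<subseteq> B \<and> (\<forall>B'. P \<subseteq> B' \<longrightarrow> sat B' Fi Ri e p)"
proof (induction p arbitrary: e rule: is_Sigma1.induct)
  case (1 p)
  have "sat B' Fi Ri e p" for B' using 1 qfree_indep[of p B Fi Ri e B'] by simp
  thus ?case by blast
next
  case (2 p x)
  from 2(3) obtain a where a: "a \<in> B" "sat B Fi Ri (e(x := a)) p" by auto
  from 2(2)[OF a(2)] obtain P where P: "finite P" "P \<subseteq> B" "\<forall>B'. P \<subseteq> B' \<longrightarrow> sat B' Fi Ri (e(x := a)) p"
    by blast
  have "\<forall>B'. insert a P \<subseteq> B' \<longrightarrow> sat B' Fi Ri e (Ex x p)"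
  proof (intro allI impI)
    fix B' assume "insert a P \<subseteq> B'"
    then have "a \<in> B'" "P \<subseteq> B'" by auto
    then show "sat B' Fi Ri e (Ex x p)" using P(3) by auto
  qed
  moreover have "finite (insert a P)" "insert a P \<subseteq> B" using a P by auto
  ultimately show ?case by blast
qed

lemma models_All: "models B Fi Ri {All x p} = models B Fi Ri {p}"
proof
  assume h: "models B Fi Ri {All x p}"
  show "models B Fi Ri {p}" unfolding models_def
  proof (intro ballI allI impI)
    fix q and e :: "nat \<Rightarrow> 'a" assume "q \<in> {p}" "range e \<subseteq> B"
    hence "\<forall>a\<in>B. sat B Fi Ri (e(x := a)) p" using h by (auto simp: models_def)
    moreover have "e x \<in> B" using `range e \<subseteq> B` by auto
    ultimately show "sat B Fi Ri e q" using `q \<in> {p}` by (metis fun_upd_triv singletonD)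
  qed
next
  assume h: "models B Fi Ri {p}"
  show "models B Fi Ri {All x p}" unfolding models_def
  proof (intro ballI allI impI)
    fix q and e :: "nat \<Rightarrow> 'a" assume "q \<in> {All x p}" "range e \<subseteq> B"
    have "sat B Fi Ri (e(x := a)) p" if "a \<in> B" for a
      using h that `range e \<subseteq> B` unfolding models_def by (auto simp: image_subset_iff)
    thus "sat B Fi Ri e q" using `q \<in> {All x p}` by auto
  qed
qed

lemma pi2_red: "is_Pi2 q \<Longrightarrow> \<exists>s. is_Sigma1 s \<and> (\<forall>B. models B Fi Ri {q} = models B Fi Ri {s})"
proof (induction q rule: is_Pi2.induct)
  case (1 p) thus ?case by blast
next
  case (2 p x)
  then obtain s where "is_Sigma1 s" "\<forall>B. models B Fi Ri {p} = models B Fi Ri {s}" by blast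
  thus ?case using models_All[of _ Fi Ri x p] by metis
qed

lemma finite_fv_trm: "finite (fv_trm t)"
  by (induction t) auto

lemma finite_fv: "finite (fv p)"
  by (induction p) (auto simp: finite_fv_trm)

lemma models_each: "models B Fi Ri T = (\<forall>p\<in>T. models B Fi Ri {p})"
  by (auto simp: models_def)

lemma sigma_cond:
  assumes "B \<subseteq> A" "b0 \<in> B" "d \<in> A"
  shows "models B Fi Ri {s} \<longleftrightarrow>
    (\<forall>e. e ` fv s \<subseteq> A \<and> (\<forall>v. v \<notin> fv s \<longrightarrow> e v = d) \<longrightarrow> e ` fv s \<subseteq> B \<longrightarrow> sat B Fi Ri e s)"
proof
  assume h: "models B Fi Ri {s}"
  show "\<forall>e. e ` fv s \<subseteq> A \<and> (\<forall>v. v \<notin> fv s \<longrightarrow> e v = d) \<longrightarrow> e ` fv s \<subseteq> B \<longrightarrow> sat B Fi Ri e s"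
  proof (intro allI impI)
    fix e :: "nat \<Rightarrow> 'a" assume "e ` fv s \<subseteq> A \<and> (\<forall>v. v \<notin> fv s \<longrightarrow> e v = d)" and eB: "e ` fv s \<subseteq> B"
    define e' where "e' = (\<lambda>v. if v \<in> fv s then e v else b0)"
    have "range e' \<subseteq> B" using eB assms(2) by (auto simp: e'_def)
    hence "sat B Fi Ri e' s" using h by (auto simp: models_def)
    moreover have "sat B Fi Ri e' s = sat B Fi Ri e s" by (rule sat_cong) (simp add: e'_def)
    ultimately show "sat B Fi Ri e s" by simp
  qed
next
  assume h: "\<forall>e. e ` fv s \<subseteq> A \<and> (\<forall>v. v \<notin> fv s \<longrightarrow> e v = d) \<longrightarrow> e ` fv s \<subseteq> B \<longrightarrow> sat B Fi Ri e s"
  show "models B Fi Ri {s}" unfolding models_def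
  proof (intro ballI allI impI)
    fix q and e :: "nat \<Rightarrow> 'a" assume q: "q \<in> {s}" and r: "range e \<subseteq> B"
    define e' where "e' = (\<lambda>v. if v \<in> fv s then e v else d)"
    have "e' ` fv s \<subseteq> B" using r by (auto simp: e'_def)
    moreover have "e' ` fv s \<subseteq> A" using r assms(1) by (auto simp: e'_def)
    moreover have "\<forall>v. v \<notin> fv s \<longrightarrow> e' v = d" by (simp add: e'_def)
    ultimately have "sat B Fi Ri e' s" using h by blast
    moreover have "sat B Fi Ri e' s = sat B Fi Ri e s" by (rule sat_cong) (simp add: e'_def)
    ultimately show "sat B Fi Ri e q" using q by simp
  qed
qed

lemma opn_ne: "opn A {B. B \<noteq> {}}"
  unfolding opn_def
proof (intro ballI impI)
  fix B assume "B \<in> {B. B \<noteq> {}}" "B \<subseteq> A"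
  then obtain b where "b \<in> B" by auto
  hence "B \<in> cyl A {b} {}" "cyl A {b} {} \<subseteq> {B. B \<noteq> {}}" using `B \<subseteq> A` by (auto simp: cyl_def)
  thus "\<exists>P N. finite P \<and> finite N \<and> B \<in> cyl A P N \<and> cyl A P N \<subseteq> {B. B \<noteq> {}}" by blast
qed

lemma opn_clo: "opn A {B. set xs \<subseteq> B \<and> length xs = n \<longrightarrow> y \<in> B}"
  unfolding opn_def
proof (intro ballI impI)
  fix B assume B: "B \<in> {B. set xs \<subseteq> B \<and> length xs = n \<longrightarrow> y \<in> B}" "B \<subseteq> A"
  show "\<exists>P N. finite P \<and> finite N \<and> B \<in> cyl A P N \<and> cyl A P N \<subseteq> {B. set xs \<subseteq> B \<and> length xs = n \<longrightarrow> y \<in> B}"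
  proof (cases "length xs = n")
    case False
    hence "B \<in> cyl A {} {}" "cyl A {} {} \<subseteq> {B. set xs \<subseteq> B \<and> length xs = n \<longrightarrow> y \<in> B}"
      using B by (auto simp: cyl_def)
    thus ?thesis by blast
  next
    case len: True
    show ?thesis
  proof (cases "set xs \<subseteq> B")
    case True
    hence "B \<in> cyl A (insert y (set xs)) {}" "cyl A (insert y (set xs)) {} \<subseteq> {B. set xs \<subseteq> B \<and> length xs = n \<longrightarrow> y \<in> B}"
      using B len by (auto simp: cyl_def)
    thus ?thesis by blast
  next
    case False
    then obtain a where "a \<in> set xs" "a \<notin> B" by auto
    hence "B \<in> cyl A {} {a}" "cyl A {} {a} \<subseteq> {B. set xs \<subseteq> B \<and> length xs = n \<longrightarrow> y \<in> B}"
      using B by (auto simp: cyl_def)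
    thus ?thesis by blast
  qed
  qed
qed

lemma opn_sig:
  assumes "is_Sigma1 s" "finite V"
  shows "opn A {B. e ` V \<subseteq> B \<longrightarrow> sat B Fi Ri e s}"
  unfolding opn_def
proof (intro ballI impI)
  fix B assume B: "B \<in> {B. e ` V \<subseteq> B \<longrightarrow> sat B Fi Ri e s}" "B \<subseteq> A"
  show "\<exists>P N. finite P \<and> finite N \<and> B \<in> cyl A P N \<and> cyl A P N \<subseteq> {B. e ` V \<subseteq> B \<longrightarrow> sat B Fi Ri e s}"
  proof (cases "e ` V \<subseteq> B")
    case True
    hence "sat B Fi Ri e s" using B(1) by simp
    hence "\<exists>P. finite P \<and> P \<subseteq> B \<and> (\<forall>B'. P \<subseteq> B' \<longrightarrow> sat B' Fi Ri e s)"
      by (rule sigma1_wit[OF assms(1)])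
    then obtain P where P: "finite P" "P \<subseteq> B" "\<forall>B'. P \<subseteq> B' \<longrightarrow> sat B' Fi Ri e s"
      by blast
    have "B \<in> cyl A P {}" using P(2) B(2) by (simp add: cyl_def)
    moreover have "cyl A P {} \<subseteq> {B. e ` V \<subseteq> B \<longrightarrow> sat B Fi Ri e s}"
    proof (rule subsetI)
      fix X assume "X \<in> cyl A P {}"
      hence "P \<subseteq> X" by (simp add: cyl_def)
      thus "X \<in> {B. e ` V \<subseteq> B \<longrightarrow> sat B Fi Ri e s}" using P(3) by simp
    qed
    ultimately show ?thesis using P(1) finite.emptyI by blast
  next
    case False
    then obtain a where a: "a \<in> e ` V" "a \<notin> B" by blast
    have "B \<in> cyl A {} {a}" using a B(2) by (simp add: cyl_def)
    moreover have "cyl A {} {a} \<subseteq> {B. e ` V \<subseteq> B \<longrightarrow> sat B Fi Ri e s}"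
      using a(1) unfolding cyl_def by blast
    ultimately show ?thesis by blast
  qed
qed

lemma perfect_set:
  fixes A :: "'a set" and U :: "'a set set set"
  assumes "countable A" "countable U" "U \<noteq> {}" "\<forall>V\<in>U. opn A V"
    and "uncountable F" and "F = {B. B \<subseteq> A \<and> (\<forall>V\<in>U. B \<in> V)}"
  shows "\<exists>g :: (nat \<Rightarrow> bool) \<Rightarrow> 'a set. inj g \<and> range g \<subseteq> F"
proof (rule perfect_seq[of A "from_nat_into U"])
  show "opn A (from_nat_into U n)" for n using assms from_nat_into by blast
  show "F = {B. B \<subseteq> A \<and> (\<forall>n. B \<in> from_nat_into U n)}"
    using assms(6) range_from_nat_into[OF assms(3,2)] by auto
  show "countable A" by fact
  show "uncountable F" by fact
qed

theorem corollary5p63: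
  fixes arF :: "'f \<Rightarrow> nat" and arR :: "'r \<Rightarrow> nat"
    and A :: "'u set" and Fi :: "'f \<Rightarrow> 'u list \<Rightarrow> 'u" and Ri :: "'r \<Rightarrow> 'u list \<Rightarrow> bool"
    and T :: "('f, 'r) fm set"
  assumes "is_structure arF A Fi"
    and "countable A" and "countable (UNIV :: 'f set)" and "countable (UNIV :: 'r set)"
    and "\<forall>p\<in>T. wf_fm arF arR p \<and> sentence p \<and> is_Pi2 p"
  shows "countable (Sub arF A Fi Ri T) \<or> Sub arF A Fi Ri T \<approx> (UNIV :: real set)"
proof (cases "countable (Sub arF A Fi Ri T)")
  case True thus ?thesis by simp
next
  case False
  define S where "S = Sub arF A Fi Ri T"
  have SA: "S \<subseteq> Pow A" by (auto simp: S_def Sub_def)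
  have "A \<noteq> {}"
  proof
    assume "A = {}"
    hence "S \<subseteq> {{}}" using SA by blast
    hence "countable S" by (rule countable_subset) simp
    thus False using False S_def by simp
  qed
  then obtain d where d: "d \<in> A" by blast
  have "\<forall>p\<in>T. \<exists>s. is_Sigma1 s \<and> (\<forall>B. models B Fi Ri {p} = models B Fi Ri {s})"
    using assms(5) pi2_red by blast
  then obtain sg where sg: "\<And>p. p \<in> T \<Longrightarrow> is_Sigma1 (sg p) \<and> (\<forall>B. models B Fi Ri {p} = models B Fi Ri {sg p})"
    by metis
  define E where "E p = {e. e ` fv (sg p) \<subseteq> A \<and> (\<forall>v. v \<notin> fv (sg p) \<longrightarrow> e v = d)}" for p
  define CL where "CL = {(f, xs). xs \<in> lists A \<and> length xs = arF f}"
  define U1 where "U1 = (\<lambda>(f, xs). {B. set xs \<subseteq> B \<and> length xs = arF f \<longrightarrow> Fi f xs \<in> B})"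
  define U2 where "U2 = (\<lambda>(p, e). {B. e ` fv (sg p) \<subseteq> B \<longrightarrow> sat B Fi Ri e (sg p)})"
  define UU where "UU = insert {B. B \<noteq> {}} (U1 ` CL \<union> U2 ` (SIGMA p:T. E p))"
  have cE: "countable (E p)" for p
  proof -
    have "inj_on (\<lambda>e. restrict e (fv (sg p))) (E p)"
    proof (rule inj_onI)
      fix e1 e2 assume h: "e1 \<in> E p" "e2 \<in> E p" "restrict e1 (fv (sg p)) = restrict e2 (fv (sg p))"
      show "e1 = e2"
      proof (rule ext)
        fix v show "e1 v = e2 v"
        proof (cases "v \<in> fv (sg p)")
          case True
          have "restrict e1 (fv (sg p)) v = restrict e2 (fv (sg p)) v" using h(3) by simp
          thus ?thesis using True by simp
        next
          case False thus ?thesis using h(1,2) by (simp add: E_def)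
        qed
      qed
    qed
    moreover have "(\<lambda>e. restrict e (fv (sg p))) ` E p \<subseteq> PiE (fv (sg p)) (\<lambda>_. A)"
      by (auto simp: E_def)
    moreover have "countable (PiE (fv (sg p)) (\<lambda>_. A))"
      by (rule countable_PiE) (use finite_fv assms(2) in auto)
    ultimately show ?thesis by (meson countable_image_inj_on countable_subset)
  qed
  have cT: "countable T"
    using countable_subset[OF subset_UNIV countable_fm[OF assms(3,4)]] by blast
  have cCL: "countable CL"
  proof -
    have "CL \<subseteq> UNIV \<times> lists A" by (auto simp: CL_def)
    moreover have "countable (UNIV \<times> lists A :: ('f \<times> 'u list) set)"
      using assms(2,3) by (intro countable_SIGMA countable_lists) auto
    ultimately show ?thesis using countable_subset by blast
  qed
  have cUU: "countable UU"
    unfolding UU_def by (intro countable_insert countable_Un countable_image countable_SIGMA cCL cT cE)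
  have oUU: "\<forall>V\<in>UU. opn A V"
  proof
    fix V assume "V \<in> UU"
    then consider "V = {B. B \<noteq> {}}" | "V \<in> U1 ` CL" | "V \<in> U2 ` (SIGMA p:T. E p)"
      unfolding UU_def by blast
    thus "opn A V"
    proof cases
      case 1 thus ?thesis using opn_ne by simp
    next
      case 2
      then obtain c where "V = U1 c" by blast
      moreover obtain f xs where "c = (f, xs)" by (cases c)
      ultimately have "V = U1 (f, xs)" by simp
      thus ?thesis using opn_clo by (simp add: U1_def)
    next
      case 3
      then obtain p e where pe: "p \<in> T" "V = U2 (p, e)" by blast
      have "is_Sigma1 (sg p)" using sg pe(1) by blast
      from opn_sig[OF this finite_fv] show ?thesis using pe(2) unfolding U2_def by simp
    qed
  qed
  have SF: "S = {B. B \<subseteq> A \<and> (\<forall>V\<in>UU. B \<in> V)}"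
  proof (intro set_eqI iffI)
    fix B assume B: "B \<in> S"
    hence BA: "B \<subseteq> A" and cd: "closed_dom arF B Fi" and mo: "models B Fi Ri T"
      by (auto simp: S_def Sub_def)
    from cd have ne: "B \<noteq> {}" by (simp add: closed_dom_def)
    then obtain b0 where b0: "b0 \<in> B" by blast
    have "B \<in> V" if "V \<in> UU" for V
    proof -
      from that consider "V = {B. B \<noteq> {}}" | "V \<in> U1 ` CL" | "V \<in> U2 ` (SIGMA p:T. E p)"
        unfolding UU_def by blast
      thus ?thesis
      proof cases
        case 1 thus ?thesis using ne by simp
      next
        case 2 thus ?thesis using cd unfolding U1_def closed_dom_def by auto
      next
        case 3
        then obtain p e where pe: "p \<in> T" "e \<in> E p" "V = U2 (p, e)" by blast
        have "models B Fi Ri {p}" using mo pe(1) models_each by blast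
        hence "models B Fi Ri {sg p}" using sg pe(1) by blast
        hence "\<forall>e. e ` fv (sg p) \<subseteq> A \<and> (\<forall>v. v \<notin> fv (sg p) \<longrightarrow> e v = d) \<longrightarrow> e ` fv (sg p) \<subseteq> B \<longrightarrow> sat B Fi Ri e (sg p)"
          using sigma_cond[OF BA b0 d] by blast
        thus ?thesis using pe unfolding U2_def E_def by simp
      qed
    qed
    thus "B \<in> {B. B \<subseteq> A \<and> (\<forall>V\<in>UU. B \<in> V)}" using BA by blast
  next
    fix B assume B: "B \<in> {B. B \<subseteq> A \<and> (\<forall>V\<in>UU. B \<in> V)}"
    hence BA: "B \<subseteq> A" and all: "\<And>V. V \<in> UU \<Longrightarrow> B \<in> V" by auto
    have ne: "B \<noteq> {}" using all[of "{B. B \<noteq> {}}"] by (simp add: UU_def)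
    then obtain b0 where b0: "b0 \<in> B" by blast
    have "closed_dom arF B Fi" unfolding closed_dom_def
    proof (intro conjI ne allI impI)
      fix f xs assume h: "set xs \<subseteq> B \<and> length xs = arF f"
      hence "(f, xs) \<in> CL" using BA by (auto simp: CL_def)
      hence "B \<in> U1 (f, xs)" using all by (simp add: UU_def)
      thus "Fi f xs \<in> B" using h by (simp add: U1_def)
    qed
    moreover have "models B Fi Ri T"
    proof -
      have "models B Fi Ri {p}" if p: "p \<in> T" for p
      proof -
        have "\<forall>e. e ` fv (sg p) \<subseteq> A \<and> (\<forall>v. v \<notin> fv (sg p) \<longrightarrow> e v = d) \<longrightarrow> e ` fv (sg p) \<subseteq> B \<longrightarrow> sat B Fi Ri e (sg p)"
        proof (intro allI impI)
          fix e assume "e ` fv (sg p) \<subseteq> A \<and> (\<forall>v. v \<notin> fv (sg p) \<longrightarrow> e v = d)" and eB: "e ` fv (sg p) \<subseteq> B"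
          from this(1) have "e \<in> E p" by (simp add: E_def)
          hence "B \<in> U2 (p, e)" using all p by (simp add: UU_def)
          thus "sat B Fi Ri e (sg p)" using eB by (simp add: U2_def)
        qed
        hence "models B Fi Ri {sg p}" using sigma_cond[OF BA b0 d] by blast
        thus ?thesis using sg p by blast
      qed
      thus ?thesis using models_each by blast
    qed
    ultimately show "B \<in> S" using BA by (simp add: S_def Sub_def)
  qed
  have unc: "uncountable S" using False S_def by simp
  have neU: "UU \<noteq> {}" by (simp add: UU_def)
  from perfect_set[OF assms(2) cUU neU oUU unc SF]
  obtain g :: "(nat \<Rightarrow> bool) \<Rightarrow> 'u set" where g: "inj g" "range g \<subseteq> S"
    by blast
  have l1: "(UNIV :: (nat \<Rightarrow> bool) set) \<lesssim> S"
    unfolding lepoll_def using g by blast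
  have l2: "(UNIV :: nat set set) \<lesssim> (UNIV :: (nat \<Rightarrow> bool) set)"
    unfolding lepoll_def
    by (rule exI[of _ "\<lambda>X n. n \<in> X"]) (auto simp: inj_on_def fun_eq_iff set_eq_iff)
  have l3: "S \<lesssim> (UNIV :: nat set set)"
    unfolding lepoll_def
  proof (rule exI[of _ "\<lambda>B. to_nat_on A ` B"], intro conjI)
    show "inj_on (\<lambda>B. to_nat_on A ` B) S"
    proof (rule inj_onI)
      fix B1 B2 assume h: "B1 \<in> S" "B2 \<in> S" "to_nat_on A ` B1 = to_nat_on A ` B2"
      have "B1 \<subseteq> A" "B2 \<subseteq> A" using h(1,2) SA by auto
      thus "B1 = B2" using inj_on_image_eq_iff[OF inj_on_to_nat_on[OF assms(2)], of B1 B2] h(3) by simp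
    qed
  qed auto
  have "S \<approx> (UNIV :: nat set set)"
    using lepoll_antisym[OF l3 lepoll_trans[OF l2 l1]] .
  hence "S \<approx> (UNIV :: real set)"
    using eqpoll_trans[OF _ nat_sets_eqpoll_reals] by blast
  thus ?thesis using S_def by simp
qed
end
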